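(* Let $\mathfrak{g}$ be the $7$-dimensional Lie algebra with basis $\{e_1,\dots,e_7\}$ whose Lie bracket is determined by $A_1\in\mathfrak{gl}_2(\mathbb{R})$ and $A,B,C\in\mathfrak{gl}_4(\mathbb{R})$ as described in the context, and let $\varphi=e^{127}+e^{347}+e^{567}+e^{135}-e^{146}-e^{236}-e^{245}$. Then: (i) $\ast\varphi=e^{3456}+\omega_7\wedge e^{12}+\omega_1\wedge e^{27}-\omega_2\wedge e^{17}$; (ii) $d\ast\varphi=-\operatorname{tr}(A)\,e^{34567}+\left(\theta(A)\omega_7-\operatorname{tr}(A_1)\,\omega_7+\theta(B)\omega_1+\theta(C)\omega_2\right)\wedge e^{127}$; (iii) $\ast d\ast\varphi=-\operatorname{tr}(A)\,e^{12}+\ast_{\mathfrak{g}_1}\left(\theta(A)\omega_7-\operatorname{tr}(A_1)\,\omega_7+\theta(B)\omega_1+\theta(C)\omega_2\right)$; (iv) $d\ast d\ast\varphi=\operatorname{tr}(A_1)\operatorname{tr}(A)\,e^{127}-\theta(A)\beta\wedge e^7-\theta(B)\beta\wedge e^1-\theta(C)\beta\wedge e^2$, where $\beta:=(\operatorname{tr}(A_1)+\operatorname{tr}(A))\,\omega_7+\theta(A^t)\omega_7+\theta(B^t)\omega_1+\theta(C^t)\omega_2$.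
   Context: $\mathfrak{g}$ is a $7$-dimensional Lie algebra with basis $\{e_1,\dots,e_7\}$, dual basis $\{e^1,\dots,e^7\}$, $e^{ij\dots}=e^i\wedge e^j\wedge\cdots$. The bracket is given by $A_1=\operatorname{ad}e_7|_{\operatorname{span}\{e_1,e_2\}}=\begin{pmatrix}x&z\\ y&w\end{pmatrix}$, $A=\operatorname{ad}e_7|_{\mathfrak{g}_1}$, $B=\operatorname{ad}e_1|_{\mathfrak{g}_1}$, $C=\operatorname{ad}e_2|_{\mathfrak{g}_1}$, where $\mathfrak{g}_1=\operatorname{span}\{e_3,e_4,e_5,e_6\}$ is an abelian ideal, $\operatorname{span}\{e_1,e_2\}$ is abelian, $\operatorname{span}\{e_7,e_1,e_2\}$ is a subalgebra, $\operatorname{tr}B=\operatorname{tr}C=0$, and $[A,B]=xB+yC$, $[A,C]=zB+wC$, $[B,C]=0$. The positive $3$-form $\varphi$ makes $\{e_1,\dots,e_7\}$ an oriented orthonormal basis; $\ast$ is its Hodge star and $\ast_{\mathfrak{g}_1}$ the Hodge star of $\Lambda^\bullet\mathfrak{g}_1^*$ (orientation $e^{3456}$). $\omega_7=e^{34}+e^{56}$, $\omega_1=e^{35}-e^{46}$, $\omega_2=-e^{36}-e^{45}$. For $M\in\mathfrak{gl}(\mathfrak{g}_1)$, $\theta(M)$ acts on $\Lambda^k\mathfrak{g}_1^*$ by $\theta(M)\alpha(v_1,\dots,v_k)=-\alpha(Mv_1,\dots,v_k)-\dots-\alpha(v_1,\dots,Mv_k)$. *)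

theory Defs
  imports Main "Jordan_Normal_Form.Matrix"
begin

text \<open>Left-invariant forms on the 7-dimensional Lie algebra with basis e_1,...,e_7 are
represented by their coefficient functions: a (possibly inhomogeneous) form alpha is a map
from finite sets of indices I (subsets of {1..7}) to reals; alpha I is the coefficient of
e^I = e^{i_1} wedge ... wedge e^{i_k}, where i_1 < ... < i_k are the elements of I.
Equivalently alpha I = alpha(e_{i_1},...,e_{i_k}) (determinant convention).\<close>

type_synonym form = "nat set \<Rightarrow> real"

definition fzero :: form where "fzero = (\<lambda>K. 0)"
definition fadd :: "form \<Rightarrow> form \<Rightarrow> form" (infixl "+\<^sub>f" 65)
  where "fadd a b = (\<lambda>K. a K + b K)"
definition fsub :: "form \<Rightarrow> form \<Rightarrow> form" (infixl "-\<^sub>f" 65)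
  where "fsub a b = (\<lambda>K. a K - b K)"
definition scal :: "real \<Rightarrow> form \<Rightarrow> form"
  where "scal c a = (\<lambda>K. c * a K)"

definition inv_count :: "nat list \<Rightarrow> nat" where
  "inv_count xs = card {(a,b). a < b \<and> b < length xs \<and> xs!a > xs!b}"
definition sgn_list :: "nat list \<Rightarrow> real" where
  "sgn_list xs = (-1) ^ inv_count xs"

text \<open>Value of a form on the basis vectors e_{x_1},...,e_{x_k}.\<close>
definition evalf :: "form \<Rightarrow> nat list \<Rightarrow> real" where
  "evalf a xs = (if distinct xs then sgn_list xs * a (set xs) else 0)"

definition sgn_pair :: "nat set \<Rightarrow> nat set \<Rightarrow> real" where
  "sgn_pair I J = (-1) ^ card {(i,j). i \<in> I \<and> j \<in> J \<and> i > j}"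
definition wedge :: "form \<Rightarrow> form \<Rightarrow> form" (infixl "\<wedge>\<^sub>f" 70) where
  "wedge a b = (\<lambda>K. \<Sum>I\<in>Pow K. sgn_pair I (K - I) * a I * b (K - I))"

definition fone :: form where "fone = (\<lambda>K. if K = {} then 1 else 0)"
definition e1 :: "nat \<Rightarrow> form" where "e1 i = (\<lambda>K. if K = {i} then 1 else 0)"
definition ee :: "nat list \<Rightarrow> form" where "ee xs = foldr (\<lambda>i acc. e1 i \<wedge>\<^sub>f acc) xs fone"

text \<open>Structure constants: [e_i, e_j] = sum_l c i j l e_l. Indices 3..6 of g_1 correspond
to the row/column indices 0..3 of the 4x4 matrices A, B, C.\<close>
definition brk0 :: "real \<Rightarrow> real \<Rightarrow> real \<Rightarrow> real \<Rightarrow> real mat \<Rightarrow> real mat \<Rightarrow> real mat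
   \<Rightarrow> nat \<Rightarrow> nat \<Rightarrow> nat \<Rightarrow> real" where
  "brk0 x y z w A B C i j l =
    (if i = 7 \<and> j = 1 then (if l = 1 then x else if l = 2 then y else 0)
     else if i = 7 \<and> j = 2 then (if l = 1 then z else if l = 2 then w else 0)
     else if i = 7 \<and> j \<in> {3..6} \<and> l \<in> {3..6} then A $$ (l - 3, j - 3)
     else if i = 1 \<and> j \<in> {3..6} \<and> l \<in> {3..6} then B $$ (l - 3, j - 3)
     else if i = 2 \<and> j \<in> {3..6} \<and> l \<in> {3..6} then C $$ (l - 3, j - 3)
     else 0)"

definition lie_c :: "real \<Rightarrow> real \<Rightarrow> real \<Rightarrow> real \<Rightarrow> real mat \<Rightarrow> real mat \<Rightarrow> real mat
   \<Rightarrow> nat \<Rightarrow> nat \<Rightarrow> nat \<Rightarrow> real" where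
  "lie_c x y z w A B C i j l = brk0 x y z w A B C i j l - brk0 x y z w A B C j i l"

text \<open>Chevalley-Eilenberg differential of left-invariant forms:
 d alpha(X_0,...,X_p) = sum_{a<b} (-1)^(a+b) alpha([X_a,X_b], X_0,..^a..^b..,X_p).\<close>
definition dCE :: "(nat \<Rightarrow> nat \<Rightarrow> nat \<Rightarrow> real) \<Rightarrow> form \<Rightarrow> form" where
  "dCE c a = (\<lambda>K. let ks = sorted_list_of_set K; n = length ks in
     \<Sum>i<n. \<Sum>j\<in>{i<..<n}. (-1) ^ (i + j) *
        (\<Sum>l\<in>{1..7}. c (ks!i) (ks!j) l *
            evalf a (l # [ks!m. m \<leftarrow> [0..<n], m \<noteq> i \<and> m \<noteq> j])))"

text \<open>Hodge star for the orthonormal basis {e_u : u in U}, oriented by the increasing order: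
 *e^I = sign(I, U-I) e^{U-I}.\<close>
definition hodge :: "nat set \<Rightarrow> form \<Rightarrow> form" where
  "hodge U a = (\<lambda>J. if J \<subseteq> U then
      sgn_list (sorted_list_of_set (U - J) @ sorted_list_of_set J) * a (U - J) else 0)"

abbreviation hodge7 :: "form \<Rightarrow> form" where "hodge7 \<equiv> hodge {1..7}"
abbreviation hodge_g1 :: "form \<Rightarrow> form" where "hodge_g1 \<equiv> hodge {3..6}"

text \<open>theta(M) on Lambda g_1^*, M e_k = sum_l M_(l-3,k-3) e_l for k,l in {3..6}:
 theta(M) alpha(v_1,...,v_k) = - sum_a alpha(v_1,..,M v_a,..,v_k).\<close>
definition theta :: "real mat \<Rightarrow> form \<Rightarrow> form" where
  "theta M a = (\<lambda>K. if K \<subseteq> {3..6} then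
     - (let ks = sorted_list_of_set K in
        \<Sum>i<length ks. \<Sum>l\<in>{3..6}. M $$ (l - 3, ks!i - 3) * evalf a (ks[i := l]))
     else 0)"

definition mtrace :: "real mat \<Rightarrow> real" where
  "mtrace M = (\<Sum>i<dim_row M. M $$ (i, i))"

definition phi :: form where
  "phi = ee [1,2,7] +\<^sub>f ee [3,4,7] +\<^sub>f ee [5,6,7] +\<^sub>f ee [1,3,5] -\<^sub>f ee [1,4,6]
         -\<^sub>f ee [2,3,6] -\<^sub>f ee [2,4,5]"

definition om7 :: form where "om7 = ee [3,4] +\<^sub>f ee [5,6]"
definition om1 :: form where "om1 = ee [3,5] -\<^sub>f ee [4,6]"
definition om2 :: form where "om2 = scal (-1) (ee [3,6]) -\<^sub>f ee [4,5]"

end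

theory Submission
  imports Defs
begin


declare One_nat_def[simp del]

definition sl :: "nat list \<Rightarrow> nat set" where "sl xs = set xs"
definition bas :: "nat list \<Rightarrow> form" where "bas ts = (\<lambda>K. if K = set ts then 1 else 0)"

lemma ssl_set: "sorted_wrt (<) ks \<Longrightarrow> sorted_list_of_set (set ks) = ks"
  by (metis finite_set sorted_list_of_set.set_sorted_key_list_of_set
      sorted_list_of_set.strict_sorted_key_list_of_set strict_sorted_equal)

lemma bas_eval: "sorted_wrt (<) ks \<Longrightarrow> sorted_wrt (<) ts \<Longrightarrow>
   bas ts (sl ks) = (if ks = ts then 1 else 0)"
  unfolding bas_def sl_def using strict_sorted_equal by metis

lemma inv_count_Nil: "inv_count [] = 0"
  by (simp add: inv_count_def)

lemma im0: "p \<in> (\<lambda>b. (0::nat, Suc b)) ` X \<longleftrightarrow> fst p = 0 \<and> snd p > 0 \<and> snd p - 1 \<in> X"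
proof (cases p)
  case (Pair u v)
  show ?thesis
  proof
    assume "p \<in> (\<lambda>b. (0::nat, Suc b)) ` X" then show "fst p = 0 \<and> snd p > 0 \<and> snd p - 1 \<in> X" by auto
  next
    assume h: "fst p = 0 \<and> snd p > 0 \<and> snd p - 1 \<in> X"
    then have "p = (\<lambda>b. (0::nat, Suc b)) (v - 1)" using Pair by auto
    then show "p \<in> (\<lambda>b. (0::nat, Suc b)) ` X" using h Pair by (metis image_eqI snd_conv)
  qed
qed

lemma im1: "p \<in> (\<lambda>(a,b). (Suc a, Suc b)) ` Y \<longleftrightarrow> fst p > 0 \<and> snd p > 0 \<and> (fst p - 1, snd p - 1) \<in> Y"
proof (cases p)
  case (Pair u v)
  show ?thesis
  proof
    assume "p \<in> (\<lambda>(a,b). (Suc a, Suc b)) ` Y" then show "fst p > 0 \<and> snd p > 0 \<and> (fst p - 1, snd p - 1) \<in> Y" by auto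
  next
    assume h: "fst p > 0 \<and> snd p > 0 \<and> (fst p - 1, snd p - 1) \<in> Y"
    then have "p = (\<lambda>(a,b). (Suc a, Suc b)) (u - 1, v - 1)" using Pair by auto
    then show "p \<in> (\<lambda>(a,b). (Suc a, Suc b)) ` Y" using h Pair by (metis image_eqI fst_conv snd_conv)
  qed
qed

lemma inv_count_Cons: "inv_count (x # xs) = length (filter (\<lambda>y. y < x) xs) + inv_count xs"
proof -
  let ?n = "length xs"
  let ?S = "{(a,b). a < b \<and> b < length (x#xs) \<and> (x#xs)!a > (x#xs)!b}"
  let ?P = "(\<lambda>b. (0::nat, Suc b)) ` {b. b < ?n \<and> xs!b < x}"
  let ?Q = "(\<lambda>(a,b). (Suc a, Suc b)) ` {(a,b). a < b \<and> b < ?n \<and> xs!a > xs!b}"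
  have eq: "?S = ?P \<union> ?Q"
    by (auto simp: set_eq_iff im0 im1 nth_Cons' split: if_splits)
  have f1: "finite {(a,b). a < b \<and> b < ?n \<and> xs!a > xs!b}"
    by (rule finite_subset[of _ "{..<?n} \<times> {..<?n}"]) auto
  have disj: "?P \<inter> ?Q = {}" by auto
  have c0: "card ?P = length (filter (\<lambda>y. y < x) xs)"
    by (subst card_image) (auto simp: inj_on_def length_filter_conv_card)
  have c1: "card ?Q = inv_count xs"
    unfolding inv_count_def
    by (subst card_image) (auto simp: inj_on_def)
  have "inv_count (x # xs) = card ?S" unfolding inv_count_def by simp
  also have "\<dots> = card ?P + card ?Q"
    unfolding eq by (rule card_Un_disjoint) (use f1 disj in auto)
  finally show ?thesis using c0 c1 by simp
qed

lemma sgn_list_eval: "sgn_list xs = (-1) ^ inv_count xs"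
  by (simp add: sgn_list_def)

lemma evalf_eval: "evalf a xs = (if distinct xs then (-1) ^ inv_count xs * a (sl (sort xs)) else 0)"
  by (simp add: evalf_def sgn_list_def sl_def)

lemma sgn_pair_set: "distinct xs \<Longrightarrow> distinct ys \<Longrightarrow>
  sgn_pair (set xs) (set ys) = (-1) ^ length (filter (\<lambda>(i,j). j < i) (List.product xs ys))"
proof -
  assume d: "distinct xs" "distinct ys"
  have "{(i,j). i \<in> set xs \<and> j \<in> set ys \<and> i > j} = set (filter (\<lambda>(i,j). j < i) (List.product xs ys))"
    by auto
  moreover have "distinct (filter (\<lambda>(i,j). j < i) (List.product xs ys))"
    using d by (simp add: distinct_product)
  ultimately have "card {(i,j). i \<in> set xs \<and> j \<in> set ys \<and> i > j} = length (filter (\<lambda>(i,j). j < i) (List.product xs ys))"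
    by (metis distinct_card)
  then show ?thesis unfolding sgn_pair_def by simp
qed

lemma wedge_bas: "(a \<wedge>\<^sub>f bas ts) K =
   (if finite K \<and> set ts \<subseteq> K then sgn_pair (K - set ts) (set ts) * a (K - set ts) else 0)"
proof (cases "finite K")
  case False
  then show ?thesis by (simp add: wedge_def)
next
  case True
  note fin = True
  have "(a \<wedge>\<^sub>f bas ts) K = (\<Sum>I\<in>Pow K. if I = K - set ts \<and> set ts \<subseteq> K
           then sgn_pair I (K - I) * a I else 0)"
    unfolding wedge_def bas_def
    by (rule sum.cong) auto
  also have "\<dots> = (if set ts \<subseteq> K then sgn_pair (K - set ts) (set ts) * a (K - set ts) else 0)"
  proof (cases "set ts \<subseteq> K")
    case True
    then have "K - (K - set ts) = set ts" by auto
    have "(\<Sum>I\<in>Pow K. if I = K - set ts \<and> set ts \<subseteq> K then sgn_pair I (K - I) * a I else 0)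
       = (\<Sum>I\<in>Pow K. if I = K - set ts then sgn_pair I (K - I) * a I else 0)" using True by simp
    also have "\<dots> = sgn_pair (K - set ts) (K - (K - set ts)) * a (K - set ts)"
      by (subst sum.delta) (use fin in auto)
    finally show ?thesis using True \<open>K - (K - set ts) = set ts\<close> by simp
  qed simp
  finally show ?thesis using True by simp
qed

lemma wedge_bas_eval: "sorted_wrt (<) ks \<Longrightarrow> sorted_wrt (<) ts \<Longrightarrow>
  (a \<wedge>\<^sub>f bas ts) (sl ks) = (if set ts \<subseteq> set ks then
     (-1) ^ length (filter (\<lambda>(i,j). j < i) (List.product (filter (\<lambda>x. x \<notin> set ts) ks) ts))
      * a (sl (filter (\<lambda>x. x \<notin> set ts) ks)) else 0)"
proof -
  assume s: "sorted_wrt (<) ks" "sorted_wrt (<) ts"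
  have d: "distinct ks" "distinct ts" using s strict_sorted_iff by auto
  have m: "set ks - set ts = set (filter (\<lambda>x. x \<notin> set ts) ks)" by auto
  have sp: "sgn_pair (set (filter (\<lambda>x. x \<notin> set ts) ks)) (set ts) =
     (-1) ^ length (filter (\<lambda>(i,j). j < i) (List.product (filter (\<lambda>x. x \<notin> set ts) ks) ts))"
    by (rule sgn_pair_set) (use d in auto)
  show ?thesis unfolding wedge_bas sl_def m sp by simp
qed

lemma ee_bas: "sorted_wrt (<) xs \<Longrightarrow> ee xs = bas xs"
proof (induction xs)
  case Nil
  then show ?case by (simp add: ee_def fone_def bas_def)
next
  case (Cons i xs)
  then have IH: "ee xs = bas xs" and lt: "\<forall>j\<in>set xs. i < j" by auto
  show ?case
  proof
    fix K
    have "ee (i # xs) K = (e1 i \<wedge>\<^sub>f bas xs) K" by (simp add: ee_def IH[unfolded ee_def])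
    also have "\<dots> = bas (i # xs) K"
    proof (cases "finite K")
      case False
      then show ?thesis unfolding wedge_def bas_def by auto
    next
      case True
      have "(e1 i \<wedge>\<^sub>f bas xs) K = (\<Sum>I\<in>Pow K. if I = {i} then sgn_pair I (K - I) * bas xs (K - I) else 0)"
        unfolding wedge_def e1_def by (rule sum.cong) auto
      also have "\<dots> = (if i \<in> K then sgn_pair {i} (K - {i}) * bas xs (K - {i}) else 0)"
        by (subst sum.delta) (use True in auto)
      also have "\<dots> = bas (i # xs) K"
      proof (cases "i \<in> K \<and> K - {i} = set xs")
        case True
        then have e: "{(a,b). a \<in> {i} \<and> b \<in> K - {i} \<and> a > b} = {}" using lt by auto
        then have "sgn_pair {i} (K - {i}) = 1" by (simp only: sgn_pair_def e card.empty power_0)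
        moreover have "K = set (i # xs)" using True by auto
        ultimately show ?thesis using True by (simp add: bas_def)
      next
        case False
        have "K \<noteq> set (i # xs)" using False lt by auto
        then show ?thesis using False by (auto simp: bas_def)
      qed
      finally show ?thesis .
    qed
    finally show "ee (i # xs) K = bas (i # xs) K" .
  qed
qed

lemma hodge_eval: "sorted_wrt (<) us \<Longrightarrow> sorted_wrt (<) ks \<Longrightarrow>
  hodge (set us) a (sl ks) = (if set ks \<subseteq> set us then
     (-1) ^ inv_count (filter (\<lambda>x. x \<notin> set ks) us @ ks) * a (sl (filter (\<lambda>x. x \<notin> set ks) us)) else 0)"
proof -
  assume s: "sorted_wrt (<) us" "sorted_wrt (<) ks"
  have m: "set us - set ks = set (filter (\<lambda>x. x \<notin> set ks) us)" by auto
  have "sorted_wrt (<) (filter (\<lambda>x. x \<notin> set ks) us)" using s sorted_wrt_filter by blast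
  then have q: "sorted_list_of_set (set (filter (\<lambda>x. x \<notin> set ks) us)) = filter (\<lambda>x. x \<notin> set ks) us"
    by (rule ssl_set)
  show ?thesis unfolding hodge_def sl_def m q ssl_set[OF s(2)] sgn_list_def by simp
qed

lemma U7: "{1..7::nat} = set [1,2,3,4,5,6,7]" by auto
lemma U4: "{3..6::nat} = set [3,4,5,6]" by auto

lemma hodge7_eval: "sorted_wrt (<) ks \<Longrightarrow>
  hodge7 a (sl ks) = (if set ks \<subseteq> set [1,2,3,4,5,6,7] then
     (-1) ^ inv_count (filter (\<lambda>x. x \<notin> set ks) [1,2,3,4,5,6,7] @ ks) * a (sl (filter (\<lambda>x. x \<notin> set ks) [1,2,3,4,5,6,7])) else 0)"
  unfolding U7 by (rule hodge_eval) simp_all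

lemma hodge4_eval: "sorted_wrt (<) ks \<Longrightarrow>
  hodge_g1 a (sl ks) = (if set ks \<subseteq> set [3,4,5,6] then
     (-1) ^ inv_count (filter (\<lambda>x. x \<notin> set ks) [3,4,5,6] @ ks) * a (sl (filter (\<lambda>x. x \<notin> set ks) [3,4,5,6])) else 0)"
  unfolding U4 by (rule hodge_eval) simp_all

lemma sum_l7: "(\<Sum>l\<in>{1..7::nat}. f l) = f 1 + f 2 + f 3 + f 4 + f 5 + f 6 + (f 7 :: real)"
  unfolding U7 by simp
lemma sum_l4: "(\<Sum>l\<in>{3..6::nat}. f l) = f 3 + f 4 + f 5 + (f 6 :: real)"
  unfolding U4 by simp

lemma h1: "sum f {..<n} = sum_list (map f [0..<n])"
  by (metis lessThan_atLeast0 set_upt sum_set_upt_conv_sum_list_nat)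
lemma h2: "sum f {i<..<n} = sum_list (map f [Suc i..<n])"
  by (metis atLeastSucLessThan_greaterThanLessThan set_upt sum_set_upt_conv_sum_list_nat)

definition suml :: "(nat \<Rightarrow> real) \<Rightarrow> nat list \<Rightarrow> real" where
  "suml f xs = sum_list (map f xs)"
lemma suml_cong[cong]: "xs = ys \<Longrightarrow> suml f xs = suml f ys" by simp
lemma suml_simps: "suml f [] = 0" "suml f (x # xs) = f x + suml f xs"
  by (simp_all add: suml_def)

lemma dCE_eval: "sorted_wrt (<) ks \<Longrightarrow> dCE c a (sl ks) =
   suml (\<lambda>i. suml (\<lambda>j. (-1) ^ (i + j) *
        suml (\<lambda>l. c (ks!i) (ks!j) l *
            evalf a (l # [ks!m. m \<leftarrow> [0..<length ks], m \<noteq> i \<and> m \<noteq> j])) [1,2,3,4,5,6,7]) [Suc i..<length ks]) [0..<length ks]"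
  unfolding dCE_def sl_def Let_def suml_def U7 by (simp only: ssl_set h1 h2 sum_set_upt_conv_sum_list_nat[symmetric]) simp

lemma theta_eval: "sorted_wrt (<) ks \<Longrightarrow> theta M a (sl ks) =
  (if set ks \<subseteq> {3..6} then
     - suml (\<lambda>i. suml (\<lambda>l. M $$ (l - 3, ks!i - 3) * evalf a (ks[i := l])) [3,4,5,6]) [0..<length ks]
   else 0)"
  unfolding theta_def sl_def Let_def suml_def U4 by (simp only: ssl_set h1) simp

lemma one_simps: "(case (1::nat) of 0 \<Rightarrow> a | Suc n \<Rightarrow> f n) = f 0"
  "(x # xs) ! (1::nat) = xs ! 0" "(x # xs)[(1::nat) := y] = x # xs[0 := y]"
  by (simp_all add: One_nat_def)

lemma fops: "(a +\<^sub>f b) K = a K + b K" "(a -\<^sub>f b) K = a K - b K" "scal c a K = c * a K"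
  "fzero K = 0"
  by (simp_all add: fadd_def fsub_def scal_def fzero_def)

definition supp7 :: "form \<Rightarrow> bool" where "supp7 a = (\<forall>K. \<not> K \<subseteq> {1..7} \<longrightarrow> a K = 0)"

lemma ext7: "supp7 a \<Longrightarrow> supp7 b \<Longrightarrow>
  (\<forall>ks\<in>set (subseqs [1,2,3,4,5,6,7]). a (sl ks) = b (sl ks)) \<Longrightarrow> a = b"
proof
  fix K
  assume sa: "supp7 a" and sb: "supp7 b" and h: "\<forall>ks\<in>set (subseqs [1,2,3,4,5,6,7]). a (sl ks) = b (sl ks)"
  show "a K = b K"
  proof (cases "K \<subseteq> {1..7}")
    case True
    then have "K \<in> Pow (set [1,2,3,4,5,6,7])" using U7 by auto
    then obtain ks where ks: "ks \<in> set (subseqs [1,2,3,4,5,6,7])" and Kk: "K = set ks"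
      unfolding subseqs_powset[symmetric] by blast
    have "a (sl ks) = b (sl ks)" using bspec[OF h ks] .
    then show ?thesis using Kk by (simp add: sl_def)
  next
    case False
    then show ?thesis using sa sb by (simp add: supp7_def)
  qed
qed

lemma supp_bas: "set ts \<subseteq> {1..7} \<Longrightarrow> supp7 (bas ts)"
  unfolding supp7_def bas_def by auto

lemma supp_ops: "supp7 a \<Longrightarrow> supp7 b \<Longrightarrow> supp7 (a +\<^sub>f b)"
  "supp7 a \<Longrightarrow> supp7 b \<Longrightarrow> supp7 (a -\<^sub>f b)"
  "supp7 a \<Longrightarrow> supp7 (scal c a)"
  by (auto simp: supp7_def fadd_def fsub_def scal_def)

lemma supp_wedge: "supp7 a \<Longrightarrow> supp7 b \<Longrightarrow> supp7 (a \<wedge>\<^sub>f b)"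
  unfolding supp7_def wedge_def
proof (intro allI impI)
  fix K :: "nat set"
  assume sa: "\<forall>K. \<not> K \<subseteq> {1..7} \<longrightarrow> a K = 0" and sb: "\<forall>K. \<not> K \<subseteq> {1..7} \<longrightarrow> b K = 0"
    and K: "\<not> K \<subseteq> {1..7}"
  show "(\<Sum>I\<in>Pow K. sgn_pair I (K - I) * a I * b (K - I)) = 0"
  proof (rule sum.neutral, rule ballI)
    fix I assume "I \<in> Pow K"
    then have "\<not> I \<subseteq> {1..7} \<or> \<not> K - I \<subseteq> {1..7}" using K by blast
    then show "sgn_pair I (K - I) * a I * b (K - I) = 0"
    proof
      assume "\<not> I \<subseteq> {1..7}" then have "a I = 0" using sa by blast
      then show ?thesis by simp
    next
      assume "\<not> K - I \<subseteq> {1..7}" then have "b (K - I) = 0" using sb by blast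
      then show ?thesis by simp
    qed
  qed
qed

lemma supp_hodge7: "supp7 (hodge7 a)"
  unfolding supp7_def hodge_def by auto
lemma supp_hodge4: "supp7 (hodge_g1 a)"
  unfolding supp7_def hodge_def by auto
lemma supp_theta: "supp7 (theta M a)"
  unfolding supp7_def theta_def by auto

lemma brk0_out: "i \<notin> {1..7} \<or> j \<notin> {1..7} \<Longrightarrow> brk0 x y z w A B C i j l = 0"
proof -
  assume h: "i \<notin> {1..7} \<or> j \<notin> {1..7}"
  have c: "\<not> (i = 7 \<and> j = 1)" "\<not> (i = 7 \<and> j = 2)" "\<not> (i = 7 \<and> j \<in> {3..6} \<and> l \<in> {3..6})"
     "\<not> (i = 1 \<and> j \<in> {3..6} \<and> l \<in> {3..6})" "\<not> (i = 2 \<and> j \<in> {3..6} \<and> l \<in> {3..6})"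
    using h by auto
  show ?thesis unfolding brk0_def by (simp only: c if_False)
qed

lemma lie_out: assumes "i \<notin> {1..7} \<or> j \<notin> {1..7}" shows "lie_c x y z w A B C i j l = 0"
proof -
  have "brk0 x y z w A B C i j l = 0" by (rule brk0_out) (use assms in auto)
  moreover have "brk0 x y z w A B C j i l = 0" by (rule brk0_out) (use assms in auto)
  ultimately show ?thesis unfolding lie_c_def by simp
qed

lemma supp_dCE: "supp7 a \<Longrightarrow> supp7 (dCE (lie_c x y z w A B C) a)"
  unfolding supp7_def
proof (intro allI impI)
  fix K :: "nat set"
  assume sa: "\<forall>K. \<not> K \<subseteq> {1..7} \<longrightarrow> a K = 0" and K: "\<not> K \<subseteq> {1..7}"
  show "dCE (lie_c x y z w A B C) a K = 0"
  proof (cases "finite K")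
    case False
    then show ?thesis by (simp add: dCE_def)
  next
    case True
    define ks where "ks = sorted_list_of_set K"
    have sK: "set ks = K" using True ks_def by simp
    obtain k where k: "k \<in> K" "k \<notin> {1..7}" using K by blast
    obtain p where p: "p < length ks" "ks ! p = k" using k sK by (metis in_set_conv_nth)
    have H: "\<forall>i<length ks. \<forall>j\<in>{i<..<length ks}. \<forall>l. lie_c x y z w A B C (ks!i) (ks!j) l *
            evalf a (l # [ks!m. m \<leftarrow> [0..<length ks], m \<noteq> i \<and> m \<noteq> j]) = 0"
    proof (intro allI impI ballI)
      fix i j l assume i: "i < length ks" and j: "j \<in> {i<..<length ks}"
      show "lie_c x y z w A B C (ks!i) (ks!j) l *
            evalf a (l # [ks!m. m \<leftarrow> [0..<length ks], m \<noteq> i \<and> m \<noteq> j]) = 0"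
      proof (cases "p = i \<or> p = j")
        case True
        then have "lie_c x y z w A B C (ks!i) (ks!j) l = 0" using p k by (intro lie_out) auto
        then show ?thesis by simp
      next
        case False
        then have "k \<in> set (l # [ks!m. m \<leftarrow> [0..<length ks], m \<noteq> i \<and> m \<noteq> j])"
          using p by auto
        then have "\<not> set (l # [ks!m. m \<leftarrow> [0..<length ks], m \<noteq> i \<and> m \<noteq> j]) \<subseteq> {1..7}"
          using k by blast
        then have "evalf a (l # [ks!m. m \<leftarrow> [0..<length ks], m \<noteq> i \<and> m \<noteq> j]) = 0"
          using sa unfolding evalf_def by auto
        then show ?thesis by simp
      qed
    qed
    show ?thesis unfolding dCE_def Let_def ks_def[symmetric]
    proof (intro sum.neutral ballI)
      fix i j assume i: "i \<in> {..<length ks}" and j: "j \<in> {i<..<length ks}"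
      have "(\<Sum>l\<in>{1..7}. lie_c x y z w A B C (ks!i) (ks!j) l *
            evalf a (l # [ks!m. m \<leftarrow> [0..<length ks], m \<noteq> i \<and> m \<noteq> j])) = 0"
        using H i j by (intro sum.neutral ballI) auto
      then show "(-1) ^ (i + j) * (\<Sum>l\<in>{1..7}. lie_c x y z w A B C (ks!i) (ks!j) l *
            evalf a (l # [ks!m. m \<leftarrow> [0..<length ks], m \<noteq> i \<and> m \<noteq> j])) = 0" by simp
    qed
  qed
qed



definition lset :: "nat \<Rightarrow> nat \<Rightarrow> nat list" where
 "lset i j = (if (i = 7 \<and> (j = 1 \<or> j = 2)) \<or> (j = 7 \<and> (i = 1 \<or> i = 2)) then [1,2]
   else if (i \<in> {1,2,7} \<and> j \<in> {3..6}) \<or> (j \<in> {1,2,7} \<and> i \<in> {3..6}) then [3,4,5,6] else [])"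

lemma lset_e1: "((i = 7 \<and> (j = 1 \<or> j = 2)) \<or> (j = 7 \<and> (i = 1 \<or> i = 2))) =
            ((j = 7 \<and> (i = 1 \<or> i = 2)) \<or> (i = (7::nat) \<and> (j = 1 \<or> j = 2)))" by blast
lemma lset_e2: "((i \<in> {1,2,7} \<and> j \<in> {3..6}) \<or> (j \<in> {1,2,7} \<and> i \<in> {3..6})) =
            ((j \<in> {1,2,7} \<and> i \<in> {3..(6::nat)}) \<or> (i \<in> {1,2,7} \<and> j \<in> {3..6}))" by blast
lemma lset_sym: "lset i j = lset j i"
  unfolding lset_def lset_e1[of i j] lset_e2[of i j] by (rule refl)

lemma brk0_z: assumes h: "l \<notin> set (lset i j)" shows "brk0 x y z w A B C i j l = 0"
proof (cases "i = 7 \<and> (j = 1 \<or> j = 2)")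
  case True
  then have "lset i j = [1,2]" by (auto simp: lset_def)
  then have l: "l \<noteq> 1" "l \<noteq> 2" using h by auto
  have c: "\<not> (i = 7 \<and> j \<in> {3..6} \<and> l \<in> {3..6})" using True by auto
  have i7: "i = 7" using True by simp
  from True have "j = 1 \<or> j = 2" by simp
  then show ?thesis
  proof
    assume "j = 1" then show ?thesis unfolding brk0_def using l i7 by simp
  next
    assume "j = 2" then show ?thesis unfolding brk0_def using l i7 by simp
  qed
next
  case F1: False
  show ?thesis
  proof (cases "(i = 7 \<or> i = 1 \<or> i = 2) \<and> j \<in> {3..6}")
    case True
    then have "j \<noteq> 1" "j \<noteq> 2" "j \<noteq> 7" by auto
    with True have "lset i j = [3,4,5,6]" unfolding lset_def by auto
    then have "l \<notin> {3..6}" using h by auto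
    then have c: "\<not> (i = 7 \<and> j = 1)" "\<not> (i = 7 \<and> j = 2)" "\<not> (i = 7 \<and> j \<in> {3..6} \<and> l \<in> {3..6})"
     "\<not> (i = 1 \<and> j \<in> {3..6} \<and> l \<in> {3..6})" "\<not> (i = 2 \<and> j \<in> {3..6} \<and> l \<in> {3..6})"
      using \<open>j \<noteq> 1\<close> \<open>j \<noteq> 2\<close> by auto
    show ?thesis unfolding brk0_def by (simp only: c if_False)
  next
    case False
    then have c: "\<not> (i = 7 \<and> j = 1)" "\<not> (i = 7 \<and> j = 2)" "\<not> (i = 7 \<and> j \<in> {3..6} \<and> l \<in> {3..6})"
     "\<not> (i = 1 \<and> j \<in> {3..6} \<and> l \<in> {3..6})" "\<not> (i = 2 \<and> j \<in> {3..6} \<and> l \<in> {3..6})"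
      using F1 by auto
    show ?thesis unfolding brk0_def by (simp only: c if_False)
  qed
qed

lemma lie_lset: "l \<notin> set (lset i j) \<Longrightarrow> lie_c x y z w A B C i j l = 0"
  unfolding lie_c_def using brk0_z[of l i j] brk0_z[of l j i] lset_sym[of i j] by simp

lemma lset_sub: "set (lset i j) \<subseteq> {1..7}" "distinct (lset i j)"
  unfolding lset_def by auto

lemma suml_set: "distinct xs \<Longrightarrow> suml f xs = sum f (set xs)"
  by (simp add: suml_def sum_list_distinct_conv_sum_set)

lemma sum17_lset: "(\<And>l. l \<notin> set (lset i j) \<Longrightarrow> f l = 0) \<Longrightarrow>
   suml f [1,2,3,4,5,6,7] = suml f (lset i j)"
proof -
  assume h: "\<And>l. l \<notin> set (lset i j) \<Longrightarrow> f l = 0"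
  have "suml f [1,2,3,4,5,6,7] = sum f {1..7}" by (simp add: suml_set U7)
  also have "\<dots> = sum f (set (lset i j))"
    by (rule sum.mono_neutral_right) (use lset_sub h in auto)
  also have "\<dots> = suml f (lset i j)" by (simp add: suml_set lset_sub)
  finally show ?thesis .
qed

lemma suml_cong2: "(\<And>x. x \<in> set xs \<Longrightarrow> f x = g x) \<Longrightarrow> suml f xs = suml g xs"
  unfolding suml_def by (metis map_eq_conv)

lemma dCE_lie_eval: "sorted_wrt (<) (ks :: nat list) \<Longrightarrow> dCE (lie_c x y z w A B C) a (sl ks) =
   suml (\<lambda>i. suml (\<lambda>j. (-1) ^ (i + j) *
        suml (\<lambda>l. lie_c x y z w A B C (ks!i) (ks!j) l *
            evalf a (l # [ks!m. m \<leftarrow> [0..<length ks], m \<noteq> i \<and> m \<noteq> j])) (lset (ks!i) (ks!j))) [Suc i..<length ks]) [0..<length ks]"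
  unfolding dCE_eval
  by (intro suml_cong2 arg_cong2[where f="(*)"] refl sum17_lset) (simp add: lie_lset)

definition fhom :: "nat \<Rightarrow> form \<Rightarrow> bool" where
  "fhom k a = (\<forall>K. finite K \<longrightarrow> card K \<noteq> k \<longrightarrow> a K = 0)"

lemma ext7h: "supp7 a \<Longrightarrow> supp7 b \<Longrightarrow> fhom k a \<Longrightarrow> fhom k b \<Longrightarrow>
  (\<forall>ks\<in>set (subseqs [1::nat,2,3,4,5,6,7]). card (set ks) = k \<longrightarrow> a (sl ks) = b (sl ks)) \<Longrightarrow> a = b"
proof (rule ext7)
  assume sa: "supp7 a" and sb: "supp7 b" and ha: "fhom k a" and hb: "fhom k b"
   and h: "\<forall>ks\<in>set (subseqs [1::nat,2,3,4,5,6,7]). card (set ks) = k \<longrightarrow> a (sl ks) = b (sl ks)"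
  show "\<forall>ks\<in>set (subseqs [1::nat,2,3,4,5,6,7]). a (sl ks) = b (sl ks)"
  proof
    fix ks :: "nat list" assume ks: "ks \<in> set (subseqs [1::nat,2,3,4,5,6,7])"
    show "a (sl ks) = b (sl ks)"
    proof (cases "card (set ks) = k")
      case True then show ?thesis using bspec[OF h ks] by blast
    next
      case False then show ?thesis using ha hb unfolding fhom_def sl_def by auto
    qed
  qed
qed

lemma hom_bas: "distinct ts \<Longrightarrow> length ts = k \<Longrightarrow> fhom k (bas ts)"
  unfolding fhom_def bas_def by (auto simp: distinct_card)

lemma hom_ops: "fhom k a \<Longrightarrow> fhom k b \<Longrightarrow> fhom k (a +\<^sub>f b)"
  "fhom k a \<Longrightarrow> fhom k b \<Longrightarrow> fhom k (a -\<^sub>f b)"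
  "fhom k a \<Longrightarrow> fhom k (scal c a)"
  by (auto simp: fhom_def fadd_def fsub_def scal_def)

lemma hom_wedge: "fhom p a \<Longrightarrow> fhom q b \<Longrightarrow> fhom (p + q) (a \<wedge>\<^sub>f b)"
  unfolding fhom_def wedge_def
proof (intro allI impI)
  fix K :: "nat set"
  assume sa: "\<forall>K. finite K \<longrightarrow> card K \<noteq> p \<longrightarrow> a K = 0" and sb: "\<forall>K. finite K \<longrightarrow> card K \<noteq> q \<longrightarrow> b K = 0"
    and K: "finite K" "card K \<noteq> p + q"
  show "(\<Sum>I\<in>Pow K. sgn_pair I (K - I) * a I * b (K - I)) = 0"
  proof (rule sum.neutral, rule ballI)
    fix I assume I: "I \<in> Pow K"
    then have fI: "finite I" "finite (K - I)" using K finite_subset by auto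
    have "card (K - I) = card K - card I" using I K by (simp add: card_Diff_subset fI)
    moreover have "card I \<le> card K" using I K by (simp add: card_mono)
    ultimately have "card I \<noteq> p \<or> card (K - I) \<noteq> q" using K by auto
    then show "sgn_pair I (K - I) * a I * b (K - I) = 0"
    proof
      assume "card I \<noteq> p" then have "a I = 0" using sa fI by blast
      then show ?thesis by simp
    next
      assume "card (K - I) \<noteq> q" then have "b (K - I) = 0" using sb fI by blast
      then show ?thesis by simp
    qed
  qed
qed

lemma hom_hodge7: "fhom k a \<Longrightarrow> k \<le> 7 \<Longrightarrow> fhom (7 - k) (hodge7 a)"
  unfolding fhom_def hodge_def
proof (intro allI impI)
  fix J :: "nat set"
  assume sa: "\<forall>K. finite K \<longrightarrow> card K \<noteq> k \<longrightarrow> a K = 0" and k: "k \<le> 7" and J: "finite J" "card J \<noteq> 7 - k"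
  show "(if J \<subseteq> {1..7} then sgn_list (sorted_list_of_set ({1..7} - J) @ sorted_list_of_set J) * a ({1..7} - J) else 0) = 0"
  proof (cases "J \<subseteq> {1..7}")
    case True
    then have "card ({1..7} - J) = 7 - card J" by (simp add: card_Diff_subset J)
    moreover have "card J \<le> 7" using True card_mono[of "{1..7::nat}" J] by simp
    ultimately have "card ({1..7::nat} - J) \<noteq> k" using J k by auto
    then have "a ({1..7} - J) = 0" using sa by auto
    then show ?thesis by simp
  qed simp
qed

lemma hom_hodge4: "fhom k a \<Longrightarrow> k \<le> 4 \<Longrightarrow> fhom (4 - k) (hodge_g1 a)"
  unfolding fhom_def hodge_def
proof (intro allI impI)
  fix J :: "nat set"
  assume sa: "\<forall>K. finite K \<longrightarrow> card K \<noteq> k \<longrightarrow> a K = 0" and k: "k \<le> 4" and J: "finite J" "card J \<noteq> 4 - k"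
  show "(if J \<subseteq> {3..6} then sgn_list (sorted_list_of_set ({3..6} - J) @ sorted_list_of_set J) * a ({3..6} - J) else 0) = 0"
  proof (cases "J \<subseteq> {3..6}")
    case True
    then have "card ({3..6} - J) = 4 - card J" by (simp add: card_Diff_subset J)
    moreover have "card J \<le> 4" using True card_mono[of "{3..6::nat}" J] by simp
    ultimately have "card ({3..6::nat} - J) \<noteq> k" using J k by auto
    then have "a ({3..6} - J) = 0" using sa by auto
    then show ?thesis by simp
  qed simp
qed

lemma evalf_hom: "fhom k a \<Longrightarrow> length xs \<noteq> k \<Longrightarrow> evalf a xs = 0"
  unfolding fhom_def evalf_def by (auto simp: distinct_card)

lemma hom_theta: "fhom k a \<Longrightarrow> fhom k (theta M a)"
  unfolding fhom_def[of k "theta M a"]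
proof (intro allI impI)
  fix K :: "nat set"
  assume ha: "fhom k a" and K: "finite K" "card K \<noteq> k"
  show "theta M a K = 0"
    unfolding theta_def Let_def
    using evalf_hom[OF ha] K by (auto intro!: sum.neutral)
qed

lemma len_rest: "i < n \<Longrightarrow> j < n \<Longrightarrow> i \<noteq> j \<Longrightarrow> length [ks!m. m \<leftarrow> [0..<n], m \<noteq> i \<and> m \<noteq> j] = n - 2"
proof -
  assume h: "i < n" "j < n" "i \<noteq> j"
  have "length [ks!m. m \<leftarrow> [0..<n], m \<noteq> i \<and> m \<noteq> j] = length (filter (\<lambda>m. m \<noteq> i \<and> m \<noteq> j) [0..<n])"
    by (induct n) auto
  also have "\<dots> = card (set (filter (\<lambda>m. m \<noteq> i \<and> m \<noteq> j) [0..<n]))"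
    by (rule distinct_card[symmetric]) simp
  also have "set (filter (\<lambda>m. m \<noteq> i \<and> m \<noteq> j) [0..<n]) = {0..<n} - {i, j}" by auto
  also have "card ({0..<n} - {i, j}) = n - 2" using h by (simp add: card_Diff_subset)
  finally show ?thesis .
qed

lemma hom_dCE: "fhom k a \<Longrightarrow> fhom (k + 1) (dCE c a)"
  unfolding fhom_def[of "k+1"]
proof (intro allI impI)
  fix K :: "nat set"
  assume ha: "fhom k a" and K: "finite K" "card K \<noteq> k + 1"
  define ks where "ks = sorted_list_of_set K"
  have n: "length ks = card K" using K ks_def by simp
  show "dCE c a K = 0"
    unfolding dCE_def Let_def ks_def[symmetric]
  proof (intro sum.neutral ballI)
    fix i j assume i: "i \<in> {..<length ks}" and j: "j \<in> {i<..<length ks}"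
    have "\<forall>l. evalf a (l # [ks!m. m \<leftarrow> [0..<length ks], m \<noteq> i \<and> m \<noteq> j]) = 0"
    proof
      fix l
      have "length (l # [ks!m. m \<leftarrow> [0..<length ks], m \<noteq> i \<and> m \<noteq> j]) = length ks - 1"
        using len_rest[of i "length ks" j ks] i j by auto
      then show "evalf a (l # [ks!m. m \<leftarrow> [0..<length ks], m \<noteq> i \<and> m \<noteq> j]) = 0"
        using evalf_hom[OF ha] n K i j by auto
    qed
    then show "(-1) ^ (i + j) * (\<Sum>l\<in>{1..7}. c (ks!i) (ks!j) l *
            evalf a (l # [ks!m. m \<leftarrow> [0..<length ks], m \<noteq> i \<and> m \<noteq> j])) = 0" by simp
  qed
qed


lemmas ev = bas_eval wedge_bas_eval evalf_eval hodge7_eval hodge4_eval dCE_lie_eval theta_eval fops lset_def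
  inv_count_Nil inv_count_Cons suml_simps One_nat_def[symmetric] one_simps upt_rec

lemmas hw22 = hom_wedge[where p=2 and q=2, simplified]
lemmas hw23 = hom_wedge[where p=2 and q=3, simplified]
lemmas hw21 = hom_wedge[where p=2 and q=1, simplified]
lemmas hd4 = hom_dCE[where k=4, simplified]
lemmas hd2 = hom_dCE[where k=2, simplified]
lemmas hh75 = hom_hodge7[where k=5, simplified]
lemmas hh42 = hom_hodge4[where k=2, simplified]

lemma mtr: "A \<in> carrier_mat 4 4 \<Longrightarrow> mtrace A = A $$ (0,0) + A $$ (1,1) + A $$ (2,2) + A $$ (3,3)"
  by (simp add: mtrace_def h1 upt_rec One_nat_def[symmetric])

definition Xf :: "real \<Rightarrow> real \<Rightarrow> real mat \<Rightarrow> real mat \<Rightarrow> real mat \<Rightarrow> form" where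
  "Xf x w A B C = theta A (bas [3,4] +\<^sub>f bas [5,6]) -\<^sub>f scal (x + w) (bas [3,4] +\<^sub>f bas [5,6])
             +\<^sub>f theta B (bas [3,5] -\<^sub>f bas [4,6]) +\<^sub>f theta C (scal (- 1) (bas [3,6]) -\<^sub>f bas [4,5])"

definition Hexp :: "real \<Rightarrow> real \<Rightarrow> real mat \<Rightarrow> real mat \<Rightarrow> real mat \<Rightarrow> form" where
  "Hexp x w A B C = scal (- (mtrace A)) (bas [1, 2]) +\<^sub>f
    scal (- (A $$ (2, 2)) - (A $$ (3, 3)) + (B $$ (0, 3)) + (B $$ (1, 2)) + (C $$ (0, 2)) - (C $$ (1, 3)) - w - x) (bas [3, 4]) +\<^sub>f
    scal (- (A $$ (0, 3)) + (A $$ (2, 1)) - (B $$ (1, 1)) - (B $$ (3, 3)) - (C $$ (0, 1)) - (C $$ (2, 3))) (bas [3, 5]) +\<^sub>f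
    scal ((A $$ (0, 2)) + (A $$ (3, 1)) - (B $$ (0, 1)) + (B $$ (3, 2)) + (C $$ (1, 1)) + (C $$ (2, 2))) (bas [3, 6]) +\<^sub>f
    scal (- (A $$ (1, 3)) - (A $$ (2, 0)) + (B $$ (1, 0)) - (B $$ (2, 3)) + (C $$ (0, 0)) + (C $$ (3, 3))) (bas [4, 5]) +\<^sub>f
    scal ((A $$ (1, 2)) - (A $$ (3, 0)) + (B $$ (0, 0)) + (B $$ (2, 2)) - (C $$ (1, 0)) - (C $$ (3, 2))) (bas [4, 6]) +\<^sub>f
    scal (- (A $$ (0, 0)) - (A $$ (1, 1)) - (B $$ (2, 1)) - (B $$ (3, 0)) - (C $$ (2, 0)) + (C $$ (3, 1)) - w - x) (bas [5, 6])"

definition Bexp :: "real \<Rightarrow> real \<Rightarrow> real mat \<Rightarrow> real mat \<Rightarrow> real mat \<Rightarrow> form" where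
  "Bexp x w A B C = scal (- (A $$ (0, 0)) - (A $$ (1, 1)) - (B $$ (0, 3)) - (B $$ (1, 2)) - (C $$ (0, 2)) + (C $$ (1, 3)) + (mtrace A) + w + x) (bas [3, 4]) +\<^sub>f
    scal ((A $$ (0, 3)) - (A $$ (2, 1)) - (B $$ (0, 0)) - (B $$ (2, 2)) + (C $$ (0, 1)) + (C $$ (2, 3))) (bas [3, 5]) +\<^sub>f
    scal (- (A $$ (0, 2)) - (A $$ (3, 1)) + (B $$ (0, 1)) - (B $$ (3, 2)) + (C $$ (0, 0)) + (C $$ (3, 3))) (bas [3, 6]) +\<^sub>f
    scal ((A $$ (1, 3)) + (A $$ (2, 0)) - (B $$ (1, 0)) + (B $$ (2, 3)) + (C $$ (1, 1)) + (C $$ (2, 2))) (bas [4, 5]) +\<^sub>f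
    scal (- (A $$ (1, 2)) + (A $$ (3, 0)) + (B $$ (1, 1)) + (B $$ (3, 3)) + (C $$ (1, 0)) + (C $$ (3, 2))) (bas [4, 6]) +\<^sub>f
    scal (- (A $$ (2, 2)) - (A $$ (3, 3)) + (B $$ (2, 1)) + (B $$ (3, 0)) + (C $$ (2, 0)) - (C $$ (3, 1)) + (mtrace A) + w + x) (bas [5, 6])"


lemma eqs: "ee [3,4,5,6] = bas [3,4,5,6]" "ee [1,2] = bas [1,2]" "ee [2,7] = bas [2,7]" "ee [1,7] = bas [1,7]"
  "ee [3,4,5,6,7] = bas [3,4,5,6,7]" "ee [1,2,7] = bas [1,2,7]" "ee [3,4] = bas [3,4]" "ee [5,6] = bas [5,6]"
  "ee [3,5] = bas [3,5]" "ee [4,6] = bas [4,6]" "ee [3,6] = bas [3,6]" "ee [4,5] = bas [4,5]"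
  "ee [7] = bas [7]" "ee [1] = bas [1]" "ee [2] = bas [2]"
  "ee [3,4,7] = bas [3,4,7]" "ee [5,6,7] = bas [5,6,7]" "ee [1,3,5] = bas [1,3,5]" "ee [1,4,6] = bas [1,4,6]"
  "ee [2,3,6] = bas [2,3,6]" "ee [2,4,5] = bas [2,4,5]"
  by (rule ee_bas; simp)+


lemma part1: "hodge7 phi = bas [3,4,5,6] +\<^sub>f (bas [3,4] +\<^sub>f bas [5,6]) \<wedge>\<^sub>f bas [1,2] +\<^sub>f
       (bas [3,5] -\<^sub>f bas [4,6]) \<wedge>\<^sub>f bas [2,7] -\<^sub>f
       (scal (- 1) (bas [3,6]) -\<^sub>f bas [4,5]) \<wedge>\<^sub>f bas [1,7]"
  unfolding phi_def eqs
  apply (rule ext7h[where k=4])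
      apply (intro supp_ops supp_bas supp_wedge supp_hodge7; simp)
     apply (intro supp_ops supp_bas supp_wedge supp_hodge7; simp)
    apply (intro hom_hodge7[where k=3, simplified] hom_ops hom_bas; simp)
   apply (intro hw22 hom_ops hom_bas; simp)
  apply (simp add: ev split del: if_split)
  done
lemma part2:
  assumes "A \<in> carrier_mat 4 4" and "B \<in> carrier_mat 4 4" and "C \<in> carrier_mat 4 4"
    and "mtrace B = 0" and "mtrace C = 0"
  shows "dCE (lie_c x y z w A B C) (bas [3,4,5,6] +\<^sub>f (bas [3,4] +\<^sub>f bas [5,6]) \<wedge>\<^sub>f bas [1,2] +\<^sub>f
       (bas [3,5] -\<^sub>f bas [4,6]) \<wedge>\<^sub>f bas [2,7] -\<^sub>f
       (scal (- 1) (bas [3,6]) -\<^sub>f bas [4,5]) \<wedge>\<^sub>f bas [1,7]) =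
      scal (- mtrace A) (bas [3,4,5,6,7])
           +\<^sub>f (theta A (bas [3,4] +\<^sub>f bas [5,6]) -\<^sub>f scal (x + w) (bas [3,4] +\<^sub>f bas [5,6])
             +\<^sub>f theta B (bas [3,5] -\<^sub>f bas [4,6]) +\<^sub>f theta C (scal (- 1) (bas [3,6]) -\<^sub>f bas [4,5])) \<wedge>\<^sub>f bas [1,2,7]"
proof -
  have tB: "B $$ (3,3) = - (B $$ (0,0) + B $$ (1,1) + B $$ (2,2))" using assms(2,4) mtr[of B] by simp
  have tC: "C $$ (3,3) = - (C $$ (0,0) + C $$ (1,1) + C $$ (2,2))" using assms(3,5) mtr[of C] by simp
  have tA: "mtrace A = A $$ (0,0) + A $$ (1,1) + A $$ (2,2) + A $$ (3,3)" using assms(1) mtr by simp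
  show ?thesis
  apply (rule ext7h[where k=5])
      apply (intro supp_ops supp_bas supp_wedge supp_dCE supp_theta; simp)
     apply (intro supp_ops supp_bas supp_wedge supp_dCE supp_theta; simp)
    apply (intro hd4 hom_ops hom_bas hw22; simp)
   apply (intro hw23 hom_ops hom_bas hom_theta; simp)
  apply (simp add: ev lie_c_def brk0_def tA tB tC split del: if_split)
  done
qed

lemma part3:
  assumes "A \<in> carrier_mat 4 4" and "B \<in> carrier_mat 4 4" and "C \<in> carrier_mat 4 4"
    and "mtrace B = 0" and "mtrace C = 0"
  shows "hodge7 (scal (- mtrace A) (bas [3,4,5,6,7]) +\<^sub>f Xf x w A B C \<wedge>\<^sub>f bas [1,2,7]) =
      scal (- mtrace A) (bas [1,2]) +\<^sub>f hodge_g1 (Xf x w A B C)"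
proof -
  have tB: "B $$ (3,3) = - (B $$ (0,0) + B $$ (1,1) + B $$ (2,2))" using assms(2,4) mtr[of B] by simp
  have tC: "C $$ (3,3) = - (C $$ (0,0) + C $$ (1,1) + C $$ (2,2))" using assms(3,5) mtr[of C] by simp
  have tA: "mtrace A = A $$ (0,0) + A $$ (1,1) + A $$ (2,2) + A $$ (3,3)" using assms(1) mtr by simp
  show ?thesis unfolding Xf_def
  apply (rule ext7h[where k=2])
      apply (intro supp_ops supp_bas supp_wedge supp_hodge7 supp_hodge4 supp_theta; simp)
     apply (intro supp_ops supp_bas supp_wedge supp_hodge7 supp_hodge4 supp_theta; simp)
    apply (intro hh75 hw23 hom_ops hom_bas hom_theta; simp)
   apply (intro hh42 hw23 hom_ops hom_bas hom_theta; simp)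
  apply (simp add: ev tA tB tC split del: if_split)
  done
qed

lemma partH:
  assumes "A \<in> carrier_mat 4 4" and "B \<in> carrier_mat 4 4" and "C \<in> carrier_mat 4 4"
    and "mtrace B = 0" and "mtrace C = 0"
  shows "scal (- mtrace A) (bas [1,2]) +\<^sub>f hodge_g1 (Xf x w A B C) = Hexp x w A B C"
proof -
  have tB: "B $$ (3,3) = - (B $$ (0,0) + B $$ (1,1) + B $$ (2,2))" using assms(2,4) mtr[of B] by simp
  have tC: "C $$ (3,3) = - (C $$ (0,0) + C $$ (1,1) + C $$ (2,2))" using assms(3,5) mtr[of C] by simp
  have tA: "mtrace A = A $$ (0,0) + A $$ (1,1) + A $$ (2,2) + A $$ (3,3)" using assms(1) mtr by simp
  show ?thesis unfolding Xf_def Hexp_def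
  apply (rule ext7h[where k=2])
      apply (intro supp_ops supp_bas supp_wedge supp_hodge7 supp_hodge4 supp_theta; simp)
     apply (intro supp_ops supp_bas supp_wedge supp_hodge7 supp_hodge4 supp_theta; simp)
    apply (intro hh42 hom_ops hom_bas hom_theta; simp)
   apply (intro hom_ops hom_bas; simp)
  apply (simp add: ev tA tB tC split del: if_split)
  done
qed

lemma partB:
  assumes "A \<in> carrier_mat 4 4" and "B \<in> carrier_mat 4 4" and "C \<in> carrier_mat 4 4"
    and "mtrace B = 0" and "mtrace C = 0"
  shows "scal (x + w + mtrace A) (bas [3,4] +\<^sub>f bas [5,6]) +\<^sub>f theta (transpose_mat A) (bas [3,4] +\<^sub>f bas [5,6])
                 +\<^sub>f theta (transpose_mat B) (bas [3,5] -\<^sub>f bas [4,6]) +\<^sub>f theta (transpose_mat C) (scal (- 1) (bas [3,6]) -\<^sub>f bas [4,5])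
     = Bexp x w A B C"
proof -
  have tB: "B $$ (3,3) = - (B $$ (0,0) + B $$ (1,1) + B $$ (2,2))" using assms(2,4) mtr[of B] by simp
  have tC: "C $$ (3,3) = - (C $$ (0,0) + C $$ (1,1) + C $$ (2,2))" using assms(3,5) mtr[of C] by simp
  have tA: "mtrace A = A $$ (0,0) + A $$ (1,1) + A $$ (2,2) + A $$ (3,3)" using assms(1) mtr by simp
  have TA: "\<And>i j. i < 4 \<Longrightarrow> j < 4 \<Longrightarrow> transpose_mat A $$ (i,j) = A $$ (j,i)" using assms(1) by simp
  have TB: "\<And>i j. i < 4 \<Longrightarrow> j < 4 \<Longrightarrow> transpose_mat B $$ (i,j) = B $$ (j,i)" using assms(2) by simp
  have TC: "\<And>i j. i < 4 \<Longrightarrow> j < 4 \<Longrightarrow> transpose_mat C $$ (i,j) = C $$ (j,i)" using assms(3) by simp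
  show ?thesis unfolding Bexp_def
  apply (rule ext7h[where k=2])
      apply (intro supp_ops supp_bas supp_theta; simp)
     apply (intro supp_ops supp_bas; simp)
    apply (intro hom_ops hom_bas hom_theta; simp)
   apply (intro hom_ops hom_bas; simp)
  apply (simp add: ev tA tB tC TA TB TC split del: if_split)
  done
qed

lemma part4:
  assumes "A \<in> carrier_mat 4 4" and "B \<in> carrier_mat 4 4" and "C \<in> carrier_mat 4 4"
    and "mtrace B = 0" and "mtrace C = 0"
  shows "dCE (lie_c x y z w A B C) (Hexp x w A B C) =
           scal ((x + w) * mtrace A) (bas [1,2,7]) -\<^sub>f theta A (Bexp x w A B C) \<wedge>\<^sub>f bas [7]
           -\<^sub>f theta B (Bexp x w A B C) \<wedge>\<^sub>f bas [1] -\<^sub>f theta C (Bexp x w A B C) \<wedge>\<^sub>f bas [2]"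
proof -
  have tB: "B $$ (3,3) = - (B $$ (0,0) + B $$ (1,1) + B $$ (2,2))" using assms(2,4) mtr[of B] by simp
  have tC: "C $$ (3,3) = - (C $$ (0,0) + C $$ (1,1) + C $$ (2,2))" using assms(3,5) mtr[of C] by simp
  have tA: "mtrace A = A $$ (0,0) + A $$ (1,1) + A $$ (2,2) + A $$ (3,3)" using assms(1) mtr by simp
  show ?thesis unfolding Bexp_def Hexp_def
  apply (rule ext7h[where k=3])
      apply (intro supp_ops supp_bas supp_wedge supp_dCE supp_theta; simp)
     apply (intro supp_ops supp_bas supp_wedge supp_dCE supp_theta; simp)
    apply (intro hd2 hom_ops hom_bas; simp)
   apply (intro hw21 hom_ops hom_bas hom_theta; simp)
  apply (simp add: ev lie_c_def brk0_def tA tB tC split del: if_split)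
  apply (simp_all add: algebra_simps)
  done
qed

theorem theorem2p4:
  fixes x y z w :: real and A B C :: "real mat"
  assumes "A \<in> carrier_mat 4 4" and "B \<in> carrier_mat 4 4" and "C \<in> carrier_mat 4 4"
    and "mtrace B = 0" and "mtrace C = 0"
    and "A * B - B * A = x \<cdot>\<^sub>m B + y \<cdot>\<^sub>m C"
    and "A * C - C * A = z \<cdot>\<^sub>m B + w \<cdot>\<^sub>m C"
    and "B * C - C * B = 0\<^sub>m 4 4"
  shows "(hodge7 phi = ee [3,4,5,6] +\<^sub>f om7 \<wedge>\<^sub>f ee [1,2] +\<^sub>f om1 \<wedge>\<^sub>f ee [2,7]
                        -\<^sub>f om2 \<wedge>\<^sub>f ee [1,7])
    \<and> (dCE (lie_c x y z w A B C) (hodge7 phi) =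
           scal (- mtrace A) (ee [3,4,5,6,7])
           +\<^sub>f (theta A om7 -\<^sub>f scal (x + w) om7 +\<^sub>f theta B om1 +\<^sub>f theta C om2) \<wedge>\<^sub>f ee [1,2,7])
    \<and> (hodge7 (dCE (lie_c x y z w A B C) (hodge7 phi)) =
           scal (- mtrace A) (ee [1,2])
           +\<^sub>f hodge_g1 (theta A om7 -\<^sub>f scal (x + w) om7 +\<^sub>f theta B om1 +\<^sub>f theta C om2))
    \<and> (let \<beta> = scal (x + w + mtrace A) om7 +\<^sub>f theta (transpose_mat A) om7
                 +\<^sub>f theta (transpose_mat B) om1 +\<^sub>f theta (transpose_mat C) om2
         in dCE (lie_c x y z w A B C) (hodge7 (dCE (lie_c x y z w A B C) (hodge7 phi))) =
           scal ((x + w) * mtrace A) (ee [1,2,7]) -\<^sub>f theta A \<beta> \<wedge>\<^sub>f ee [7]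
           -\<^sub>f theta B \<beta> \<wedge>\<^sub>f ee [1] -\<^sub>f theta C \<beta> \<wedge>\<^sub>f ee [2])"
  proof -
  note as = assms(1-5)
  have c1: "hodge7 phi = bas [3,4,5,6] +\<^sub>f (bas [3,4] +\<^sub>f bas [5,6]) \<wedge>\<^sub>f bas [1,2] +\<^sub>f
       (bas [3,5] -\<^sub>f bas [4,6]) \<wedge>\<^sub>f bas [2,7] -\<^sub>f
       (scal (- 1) (bas [3,6]) -\<^sub>f bas [4,5]) \<wedge>\<^sub>f bas [1,7]" by (rule part1)
  have c2: "dCE (lie_c x y z w A B C) (hodge7 phi) = scal (- mtrace A) (bas [3,4,5,6,7]) +\<^sub>f Xf x w A B C \<wedge>\<^sub>f bas [1,2,7]"
    unfolding c1 Xf_def by (rule part2[OF as])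
  have c3: "hodge7 (dCE (lie_c x y z w A B C) (hodge7 phi)) = scal (- mtrace A) (bas [1,2]) +\<^sub>f hodge_g1 (Xf x w A B C)"
    unfolding c2 by (rule part3[OF as])
  have c4: "dCE (lie_c x y z w A B C) (hodge7 (dCE (lie_c x y z w A B C) (hodge7 phi))) =
           scal ((x + w) * mtrace A) (bas [1,2,7]) -\<^sub>f theta A (Bexp x w A B C) \<wedge>\<^sub>f bas [7]
           -\<^sub>f theta B (Bexp x w A B C) \<wedge>\<^sub>f bas [1] -\<^sub>f theta C (Bexp x w A B C) \<wedge>\<^sub>f bas [2]"
    unfolding c3 partH[OF as] by (rule part4[OF as])
  show ?thesis
    unfolding om7_def om1_def om2_def eqs Let_def partB[OF as]
    apply (intro conjI)
       apply (rule c1)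
      apply (rule c2[unfolded Xf_def])
     apply (rule c3[unfolded Xf_def])
    apply (rule c4)
    done
qed

end
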